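(* Let $n$ be a positive integer, $1\le k\le n$, and $w\in\mathfrak S_n$. The relation $\le_{\mathcal P_w(n,k)}$ on $\mathrm{Inv}_k(w)$ is a partial order (in particular, it is antisymmetric). Furthermore, if $X\in\mathrm{Inv}_{k+1}(w)$, then the elements of $P(X)$ form an antichain in $\mathcal P_w(n,k)$.
   Context: $\mathfrak S_n$ is the symmetric group on $[n]$. $\binom{[n]}{m}$ is the set of $m$-element subsets of $[n]$, written $[x_1,\dots,x_m]$ with $x_1<\dots<x_m$. For $X=[x_1,\dots,x_m]$, $X_i$ is $X$ with $x_i$ removed and $P(X)=\{X_1,\dots,X_m\}$. $\mathrm{Inv}_m(w)=\{[x_1,\dots,x_m]\in\binom{[n]}{m}: w^{-1}(x_1)>\dots>w^{-1}(x_m)\}$. $X\in\binom{[n]}{m}$ is an $m$-quasi-inversion of $w$ if exactly one of the pairs $[x_a,x_b]$, $a<b$, is not in $\mathrm{Inv}_2(w)$. The relation $\le_{\mathcal P_w(n,k)}$ on $\mathrm{Inv}_k(w)$ is the reflexive-transitive closure of the quasi-inversion relations: whenever $X\in\binom{[n]}{k+1}$ is a $(k+1)$-quasi-inversion with $P(X)\cap\mathrm{Inv}_k(w)=\{X_i,X_{i+1}\}$, set $X_i<X_{i+1}$ if $k-i$ is odd and $X_{i+1}<X_i$ if $k-i$ is even. $\mathcal P_w(n,k)$ denotes $\mathrm{Inv}_k(w)$ with this relation. *)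

theory Defs
  imports "HOL-Combinatorics.Permutations"
begin

text \<open>Subsets of [n] are finite sets of naturals; the i-th element (1-based) of
X = [x_1,...,x_m] is the (i-1)-th entry of the sorted list of X.\<close>

definition subsets :: "nat \<Rightarrow> nat \<Rightarrow> nat set set" where
  "subsets n m = {X. X \<subseteq> {1..n} \<and> card X = m}"

definition elt :: "nat set \<Rightarrow> nat \<Rightarrow> nat" where
  "elt X i = sorted_list_of_set X ! (i - 1)"

definition del :: "nat set \<Rightarrow> nat \<Rightarrow> nat set" where
  "del X i = X - {elt X i}"

definition Pset :: "nat set \<Rightarrow> nat set set" where
  "Pset X = {del X i | i. 1 \<le> i \<and> i \<le> card X}"

definition Inv :: "nat \<Rightarrow> nat \<Rightarrow> (nat \<Rightarrow> nat) \<Rightarrow> nat set set" where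
  "Inv n m w = {X \<in> subsets n m.
      \<forall>i. 1 \<le> i \<and> i < m \<longrightarrow> inv w (elt X i) > inv w (elt X (Suc i))}"

definition quasi_inv :: "nat \<Rightarrow> nat \<Rightarrow> (nat \<Rightarrow> nat) \<Rightarrow> nat set \<Rightarrow> bool" where
  "quasi_inv n m w X \<longleftrightarrow> X \<in> subsets n m \<and>
     card {(a, b). 1 \<le> a \<and> a < b \<and> b \<le> m \<and> {elt X a, elt X b} \<notin> Inv n 2 w} = 1"

definition gen_rel :: "nat \<Rightarrow> nat \<Rightarrow> (nat \<Rightarrow> nat) \<Rightarrow> (nat set \<times> nat set) set" where
  "gen_rel n k w = {(A, B). \<exists>X i. quasi_inv n (k + 1) w X \<and> 1 \<le> i \<and> i \<le> k \<and>
       Pset X \<inter> Inv n k w = {del X i, del X (Suc i)} \<and>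
       (if odd (k - i) then (A, B) = (del X i, del X (Suc i))
        else (A, B) = (del X (Suc i), del X i))}"

definition Prel :: "nat \<Rightarrow> nat \<Rightarrow> (nat \<Rightarrow> nat) \<Rightarrow> (nat set \<times> nat set) set" where
  "Prel n k w = {(A, B). A \<in> Inv n k w \<and> B \<in> Inv n k w \<and> (A, B) \<in> (gen_rel n k w)\<^sup>*}"

end

theory Submission
  imports Defs
begin

lemma sl_less_iff:
  assumes "finite X" "i < card X" "j < card X"
  shows "sorted_list_of_set X ! i < sorted_list_of_set X ! j \<longleftrightarrow> i < j"
proof -
  let ?L = "sorted_list_of_set X"
  have s: "sorted_wrt (<) ?L" and l: "length ?L = card X" using assms(1) by auto
  show ?thesis
    using sorted_wrt_nth_less[OF s] assms l
    by (metis linorder_neqE_nat order_less_asym)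
qed

lemma sl_in: "finite X \<Longrightarrow> i < card X \<Longrightarrow> sorted_list_of_set X ! i \<in> X"
  by (metis nth_mem sorted_list_of_set.length_sorted_key_list_of_set sorted_list_of_set.set_sorted_key_list_of_set)

lemma sl_surj: "finite X \<Longrightarrow> x \<in> X \<Longrightarrow> \<exists>j<card X. x = sorted_list_of_set X ! j"
  by (metis in_set_conv_nth sorted_list_of_set.length_sorted_key_list_of_set sorted_list_of_set.set_sorted_key_list_of_set)

lemma sl_rank:
  assumes "finite X" "i < card X"
  shows "card {z\<in>X. z < sorted_list_of_set X ! i} = i"
proof -
  let ?L = "sorted_list_of_set X"
  have "{z\<in>X. z < ?L ! i} = (\<lambda>j. ?L ! j) ` {..<i}"
  proof
    show "{z\<in>X. z < ?L ! i} \<subseteq> (\<lambda>j. ?L ! j) ` {..<i}"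
    proof
      fix z assume z: "z \<in> {z\<in>X. z < ?L ! i}"
      then obtain j where j: "j < card X" "z = ?L ! j"
        using assms(1) sl_surj by blast
      then have "j < i" using sl_less_iff[OF assms(1) j(1) assms(2)] z by auto
      then show "z \<in> (\<lambda>j. ?L ! j) ` {..<i}" using j by auto
    qed
    show "(\<lambda>j. ?L ! j) ` {..<i} \<subseteq> {z\<in>X. z < ?L ! i}"
    proof
      fix z assume "z \<in> (\<lambda>j. ?L ! j) ` {..<i}"
      then obtain j where j: "j < i" "z = ?L ! j" by auto
      then have "j < card X" using assms(2) by simp
      then show "z \<in> {z\<in>X. z < ?L ! i}"
        using sl_less_iff[OF assms(1) _ assms(2)] sl_in[OF assms(1)] j by auto
    qed
  qed
  moreover have "inj_on (\<lambda>j. ?L ! j) {..<i}"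
    using assms by (intro inj_onI) (simp add: nth_eq_iff_index_eq)
  ultimately show ?thesis by (simp add: card_image)
qed

lemma elt_in: "finite X \<Longrightarrow> 1 \<le> i \<Longrightarrow> i \<le> card X \<Longrightarrow> elt X i \<in> X"
  unfolding elt_def by (rule sl_in) auto

lemma elt_less_iff: "finite X \<Longrightarrow> 1 \<le> i \<Longrightarrow> i \<le> card X \<Longrightarrow> 1 \<le> j \<Longrightarrow> j \<le> card X
   \<Longrightarrow> elt X i < elt X j \<longleftrightarrow> i < j"
  unfolding elt_def by (subst sl_less_iff) auto

lemma elt_rank: "finite X \<Longrightarrow> 1 \<le> i \<Longrightarrow> i \<le> card X \<Longrightarrow> card {z\<in>X. z < elt X i} = i - 1"
  unfolding elt_def by (rule sl_rank) auto

lemma Inv_pair: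
  assumes A: "A \<in> Inv n m w" and xy: "x \<in> A" "y \<in> A" "x < y"
  shows "inv w y < inv w x"
proof -
  have fin: "finite A" and cA: "card A = m" using A unfolding Inv_def subsets_def
    by (auto intro: finite_subset)
  let ?L = "sorted_list_of_set A"
  let ?P = "\<lambda>a b. inv w b < inv w a"
  have chain: "\<forall>j. Suc j < length ?L \<longrightarrow> ?P (?L ! j) (?L ! Suc j)"
  proof (intro allI impI)
    fix j assume "Suc j < length ?L"
    then have "1 \<le> Suc j \<and> Suc j < m" using fin cA by simp
    then have "inv w (elt A (Suc j)) > inv w (elt A (Suc (Suc j)))" using A unfolding Inv_def by blast
    then show "?P (?L ! j) (?L ! Suc j)" unfolding elt_def by simp
  qed
  have tr: "transp ?P" by (auto simp: transp_def)
  have sw: "sorted_wrt ?P ?L" using chain sorted_wrt_iff_nth_Suc_transp[OF tr] by blast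
  obtain a where a: "a < card A" "x = ?L ! a" using sl_surj[OF fin xy(1)] by blast
  obtain b where b: "b < card A" "y = ?L ! b" using sl_surj[OF fin xy(2)] by blast
  have "a < b" using sl_less_iff[OF fin a(1) b(1)] a b xy by simp
  then show ?thesis using sorted_wrt_nth_less[OF sw] a b fin by simp
qed

lemma pair_Inv2:
  assumes "x < y" "x \<in> {1..n}" "y \<in> {1..n}" "inv w y < inv w x"
  shows "{x, y} \<in> Inv n 2 w"
proof -
  have "sorted_list_of_set {x, y} = [x, y]" using assms(1) by simp
  then show ?thesis using assms unfolding Inv_def subsets_def elt_def
    by (auto simp: less_Suc_eq)
qed

lemma elt_surj: "finite X \<Longrightarrow> x \<in> X \<Longrightarrow> \<exists>j. 1 \<le> j \<and> j \<le> card X \<and> x = elt X j"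
  unfolding elt_def by (drule (1) sl_surj) (metis Suc_leI diff_Suc_1 le_add1 plus_1_eq_Suc)

definition rk :: "nat set \<Rightarrow> nat \<Rightarrow> nat" where "rk Y y = card {z\<in>Y. z < y}"
definition sg :: "nat \<Rightarrow> nat \<Rightarrow> int" where "sg k r = (if even (k + r) then -1 else 1)"
definition phi :: "nat \<Rightarrow> (nat \<Rightarrow> int) \<Rightarrow> nat set \<Rightarrow> int" where
  "phi k h Y = (\<Sum>y\<in>Y. sg k (rk Y y) * h y)"

lemma edge:
  assumes "(A, B) \<in> gen_rel n k w"
  shows "\<exists>p q. p < q \<and> inv w p \<le> inv w q \<and> (\<forall>h. phi k h B - phi k h A = h q - h p)"
proof -
  obtain X i where Xq: "quasi_inv n (k + 1) w X" and i: "1 \<le> i" "i \<le> k"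
    and PI: "Pset X \<inter> Inv n k w = {del X i, del X (Suc i)}"
    and ori: "if odd (k - i) then (A, B) = (del X i, del X (Suc i))
        else (A, B) = (del X (Suc i), del X i)"
    using assms unfolding gen_rel_def by blast
  have Xs: "X \<subseteq> {1..n}" and cX: "card X = k + 1" using Xq unfolding quasi_inv_def subsets_def by auto
  have fin: "finite X" using Xs finite_subset by blast
  define p where "p = elt X i"
  define q where "q = elt X (Suc i)"
  have pX: "p \<in> X" and qX: "q \<in> X" unfolding p_def q_def using elt_in[OF fin] i cX by auto
  have pq: "p < q" unfolding p_def q_def using elt_less_iff[OF fin] i cX by auto
  have betw: "\<not> (p < z \<and> z < q)" if zX: "z \<in> X" for z
  proof
    assume z: "p < z \<and> z < q"
    obtain j where j: "1 \<le> j" "j \<le> card X" "z = elt X j" using elt_surj[OF fin zX] by blast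
    have "i < j" using z j elt_less_iff[OF fin, of i j] i cX unfolding p_def by auto
    moreover have "j < Suc i" using z j elt_less_iff[OF fin, of j "Suc i"] i cX unfolding q_def by auto
    ultimately show False by simp
  qed
  define C where "C = X - {p, q}"
  have finC: "finite C" using fin C_def by simp
  have pC: "p \<notin> C" and qC: "q \<notin> C" using C_def by auto
  have dp: "del X i = insert q C" unfolding del_def C_def p_def[symmetric] using qX pq by auto
  have dq: "del X (Suc i) = insert p C" unfolding del_def C_def q_def[symmetric] using pX pq by auto
  have Iq: "insert q C \<in> Inv n k w" and Ip: "insert p C \<in> Inv n k w" using PI dp dq by auto
  have invpq: "inv w p \<le> inv w q"
  proof (rule ccontr)
    assume np: "\<not> inv w p \<le> inv w q"
    have "card {(a, b). 1 \<le> a \<and> a < b \<and> b \<le> k + 1 \<and> {elt X a, elt X b} \<notin> Inv n 2 w} = 1"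
      using Xq unfolding quasi_inv_def by blast
    then have "{(a, b). 1 \<le> a \<and> a < b \<and> b \<le> k + 1 \<and> {elt X a, elt X b} \<notin> Inv n 2 w} \<noteq> {}"
      by (metis card.empty zero_neq_one)
    then obtain a b where ab: "1 \<le> a" "a < b" "b \<le> k + 1" "{elt X a, elt X b} \<notin> Inv n 2 w"
      by blast
    define x where "x = elt X a"
    define y where "y = elt X b"
    have xX: "x \<in> X" and yX: "y \<in> X" unfolding x_def y_def using elt_in[OF fin] ab cX by auto
    have xy: "x < y" unfolding x_def y_def using elt_less_iff[OF fin] ab cX by auto
    have "inv w y < inv w x"
    proof (cases "x \<noteq> p \<and> y \<noteq> p")
      case True
      then have "x \<in> insert q C" "y \<in> insert q C" using xX yX C_def by auto
      then show ?thesis using Inv_pair[OF Iq] xy by blast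
    next
      case F1: False
      show ?thesis
      proof (cases "x \<noteq> q \<and> y \<noteq> q")
        case True
        then have "x \<in> insert p C" "y \<in> insert p C" using xX yX C_def by auto
        then show ?thesis using Inv_pair[OF Ip] xy by blast
      next
        case False
        then have "x = p" "y = q" using F1 xy pq by auto
        then show ?thesis using np by simp
      qed
    qed
    then have "{x, y} \<in> Inv n 2 w" using pair_Inv2[OF xy] xX yX Xs by blast
    then show False using ab(4) x_def y_def by simp
  qed
  have rkC: "rk (insert q C) c = rk (insert p C) c" if "c \<in> C" for c
  proof -
    have cX: "c \<in> X" "c \<noteq> p" "c \<noteq> q" using that C_def by auto
    have cpq: "c < p \<or> q < c" using betw[OF cX(1)] cX pq by auto
    show ?thesis
    proof (cases "c < p")
      case True
      then have "{z \<in> insert q C. z < c} = {z \<in> C. z < c}" "{z \<in> insert p C. z < c} = {z \<in> C. z < c}"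
        using pq by auto
      then show ?thesis unfolding rk_def by simp
    next
      case False
      then have qc: "q < c" using cpq by simp
      have "{z \<in> insert q C. z < c} = insert q {z \<in> C. z < c}" "{z \<in> insert p C. z < c} = insert p {z \<in> C. z < c}"
        using pq qc by auto
      moreover have "q \<notin> {z \<in> C. z < c}" "p \<notin> {z \<in> C. z < c}" using pC qC by auto
      moreover have "finite {z \<in> C. z < c}" using finC by simp
      ultimately show ?thesis unfolding rk_def by simp
    qed
  qed
  have rkq: "rk (insert q C) q = i - 1"
  proof -
    have "{z \<in> insert q C. z < q} = {z \<in> X. z < p}"
    proof (intro set_eqI iffI)
      fix z assume "z \<in> {z \<in> insert q C. z < q}"
      then show "z \<in> {z \<in> X. z < p}" using betw[of z] pq unfolding C_def by auto
    next
      fix z assume "z \<in> {z \<in> X. z < p}"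
      then show "z \<in> {z \<in> insert q C. z < q}" using pq unfolding C_def by auto
    qed
    then show ?thesis unfolding rk_def p_def using elt_rank[OF fin] i cX by simp
  qed
  have rkp: "rk (insert p C) p = i - 1"
  proof -
    have "{z \<in> insert p C. z < p} = {z \<in> X. z < p}"
    proof (intro set_eqI iffI)
      fix z assume "z \<in> {z \<in> insert p C. z < p}"
      then show "z \<in> {z \<in> X. z < p}" using betw[of z] pq unfolding C_def by auto
    next
      fix z assume "z \<in> {z \<in> X. z < p}"
      then show "z \<in> {z \<in> insert p C. z < p}" using pq unfolding C_def by auto
    qed
    then show ?thesis unfolding rk_def p_def using elt_rank[OF fin] i cX by simp
  qed
  have phq: "phi k h (insert q C) = sg k (i - 1) * h q + (\<Sum>c\<in>C. sg k (rk (insert q C) c) * h c)" for h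
    unfolding phi_def using finC qC rkq by (simp add: sum.insert)
  have php: "phi k h (insert p C) = sg k (i - 1) * h p + (\<Sum>c\<in>C. sg k (rk (insert q C) c) * h c)" for h
    unfolding phi_def using finC pC rkp rkC by (simp add: sum.insert)
  have par: "even (k + (i - 1)) \<longleftrightarrow> odd (k - i)" using i by presburger
  have sgv: "sg k (i - 1) = (if odd (k - i) then -1 else 1)" unfolding sg_def using par by simp
  show ?thesis
  proof (intro exI conjI allI)
    show "p < q" by fact
    show "inv w p \<le> inv w q" by fact
    fix h
    show "phi k h B - phi k h A = h q - h p"
    proof (cases "odd (k - i)")
      case True
      then have "A = insert q C" "B = insert p C" using ori dp dq by auto
      then show ?thesis using phq[of h] php[of h] True sgv by simp
    next
      case False
      then have "A = insert p C" "B = insert q C" using ori dp dq by auto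
      then show ?thesis using phq[of h] php[of h] False sgv by simp
    qed
  qed
qed

lemma rt_mono:
  assumes "(A, B) \<in> (gen_rel n k w)\<^sup>*"
    and hm: "\<And>u v. u < v \<Longrightarrow> inv w u \<le> inv w v \<Longrightarrow> h u \<le> h v"
  shows "phi k h A \<le> phi k h B"
  using assms(1)
proof (induction rule: rtrancl_induct)
  case base
  then show ?case by simp
next
  case (step y z)
  obtain p q where "p < q" "inv w p \<le> inv w q" "phi k h z - phi k h y = h q - h p"
    using edge[OF step(2)] by blast
  with hm[of p q] step(3) show ?case by linarith
qed

lemma tr_strict:
  assumes "(A, B) \<in> (gen_rel n k w)\<^sup>+"
  shows "phi k int A < phi k int B"
  using assms
proof (induction rule: trancl_induct)
  case (base y)
  obtain p q where "p < q" "phi k int y - phi k int A = int q - int p"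
    using edge[OF base] by blast
  then show ?case by linarith
next
  case (step y z)
  obtain p q where "p < q" "phi k int z - phi k int y = int q - int p"
    using edge[OF step(2)] by blast
  with step(3) show ?case by linarith
qed

theorem lemma3p5:
  fixes n k :: nat and w :: "nat \<Rightarrow> nat"
  assumes "0 < n" and "1 \<le> k" and "k \<le> n" and "w permutes {1..n}"
  shows "partial_order_on (Inv n k w) (Prel n k w) \<and>
         (\<forall>X \<in> Inv n (k + 1) w. \<forall>Y \<in> Pset X. \<forall>Z \<in> Pset X.
            Y \<noteq> Z \<longrightarrow> (Y, Z) \<notin> Prel n k w)"
proof (intro conjI ballI impI)
  show "partial_order_on (Inv n k w) (Prel n k w)"
    unfolding partial_order_on_def preorder_on_def
  proof (intro conjI)
    show "Prel n k w \<subseteq> Inv n k w \<times> Inv n k w" unfolding Prel_def by auto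
    show "refl_on (Inv n k w) (Prel n k w)" unfolding Prel_def refl_on_def by auto
    show "trans (Prel n k w)" unfolding Prel_def trans_def
      by (auto intro: rtrancl_trans)
    show "antisym (Prel n k w)" unfolding antisym_def
    proof (intro allI impI)
      fix A B assume "(A, B) \<in> Prel n k w" "(B, A) \<in> Prel n k w"
      then have ab: "(A, B) \<in> (gen_rel n k w)\<^sup>*" "(B, A) \<in> (gen_rel n k w)\<^sup>*"
        unfolding Prel_def by auto
      show "A = B"
      proof (rule ccontr)
        assume "A \<noteq> B"
        then have "(A, B) \<in> (gen_rel n k w)\<^sup>+" "(B, A) \<in> (gen_rel n k w)\<^sup>+"
          using ab rtrancl_eq_or_trancl by metis+
        then show False using tr_strict[of A B n k w] tr_strict[of B A n k w] by linarith
      qed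
    qed
  qed
next
  fix X Y Z assume XI: "X \<in> Inv n (k + 1) w" and Y: "Y \<in> Pset X" and Z: "Z \<in> Pset X"
    and YZ: "Y \<noteq> Z"
  show "(Y, Z) \<notin> Prel n k w"
  proof
    assume P: "(Y, Z) \<in> Prel n k w"
    have fin: "finite X" using XI unfolding Inv_def subsets_def by (auto intro: finite_subset)
    obtain a where a: "1 \<le> a" "a \<le> card X" "Y = del X a" using Y unfolding Pset_def by blast
    obtain b where b: "1 \<le> b" "b \<le> card X" "Z = del X b" using Z unfolding Pset_def by blast
    define x where "x = elt X a"
    define y where "y = elt X b"
    have xX: "x \<in> X" and yX: "y \<in> X" unfolding x_def y_def using elt_in[OF fin] a b by auto
    have Yx: "Y = X - {x}" and Zy: "Z = X - {y}" using a b unfolding x_def y_def del_def by auto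
    have xy: "x \<noteq> y" using YZ Yx Zy by auto
    have xZ: "x \<in> Z" using xX xy Zy by auto
    define dm where "dm = (\<lambda>u v. u \<le> v \<and> inv w u \<le> inv w v)"
    define s where "s = sg k (rk Z x)"
    define h where "h = (if s = 1 then (\<lambda>u. if dm u x then -1 else (0::int))
                          else (\<lambda>u. if dm x u then 1 else 0))"
    have hm: "h u \<le> h v" if "u < v" "inv w u \<le> inv w v" for u v
      using that unfolding h_def dm_def by auto
    have h0: "h u = 0" if "u \<in> X" "u \<noteq> x" for u
    proof -
      have "\<not> dm u x \<and> \<not> dm x u"
      proof (cases "u < x")
        case True
        then show ?thesis using Inv_pair[OF XI that(1) xX] unfolding dm_def by auto
      next
        case False
        then have "x < u" using that by auto
        then show ?thesis using Inv_pair[OF XI xX that(1)] unfolding dm_def by auto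
      qed
      then show ?thesis unfolding h_def by auto
    qed
    have shx: "s * h x = -1" unfolding h_def s_def sg_def dm_def by auto
    have "phi k h Y = 0" unfolding phi_def using h0 Yx by (intro sum.neutral) auto
    moreover have "phi k h Z = -1"
    proof -
      have finZ: "finite (Z - {x})" using fin Zy by auto
      have "phi k h Z = s * h x + (\<Sum>u\<in>Z - {x}. sg k (rk Z u) * h u)"
        unfolding phi_def s_def using finZ xZ
        by (metis (no_types, lifting) insert_Diff sum.insert Diff_iff singletonI)
      also have "(\<Sum>u\<in>Z - {x}. sg k (rk Z u) * h u) = 0"
        using h0 Zy by (intro sum.neutral) auto
      finally show ?thesis using shx by simp
    qed
    moreover have "phi k h Y \<le> phi k h Z"
      using P hm rt_mono unfolding Prel_def by blast
    ultimately show False by simp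
  qed
qed

end
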